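(* Let $\mathcal H\subseteq\mathcal S_+^d$ be a well-structured preconditioner set and let $f:\mathbb R^d\to\mathbb R$ be twice continuously differentiable with $\Lambda_{\mathcal H}(f)<\infty$. Then $$L_{\|\cdot\|_{\mathcal H}}(f)\le\Lambda_{\mathcal H}(f)\le d\cdot L_{\|\cdot\|_{\mathcal H}}(f).$$
   Context: $\mathcal S^d_+$ (resp. $\mathcal S^d_{++}$) denotes the set of real symmetric positive semidefinite (resp. positive definite) $d\times d$ matrices. A set $\mathcal H\subseteq\mathcal S_+^d$ is a well-structured preconditioner set if $\mathcal H=\mathcal S_+^d\cap\mathcal K$ for some set $\mathcal K$ of real $d\times d$ matrices that is closed under scalar multiplication, matrix addition and matrix multiplication and contains the identity $I_d$. For $H\in\mathcal S_+^d$, $\|x\|_H=\sqrt{x^\top Hx}$. The $\mathcal H$-norm is $\|x\|_{\mathcal H}:=\sup_{H\in\mathcal H,\operatorname{Tr}(H)\le 1}\|x\|_H$, and $\|y\|_{\mathcal H,*}:=\sup_{\|x\|_{\mathcal H}\le 1}\langle x,y\rangle$ is its dual norm. For a norm $\|\cdot\|$ with dual norm $\|\cdot\|_*$, $L_{\|\cdot\|}(f)$ is the smallest $L\ge0$ such that $\|\nabla f(x)-\nabla f(y)\|_*\le L\|x-y\|$ for all $x,y$. The adaptive smoothness is $\Lambda_{\mathcal H}(f):=\inf\{\operatorname{Tr}(H): H\in\mathcal H,\ -H\preceq\nabla^2 f(x)\preceq H\ \text{for all }x\in\mathbb R^d\}$. *)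

theory Defs
  imports "HOL-Analysis.Analysis"
begin

definition psd :: "real^'n^'n \<Rightarrow> bool" where
  "psd M \<longleftrightarrow> transpose M = M \<and> (\<forall>x. 0 \<le> x \<bullet> (M *v x))"

definition well_structured :: "(real^'n^'n) set \<Rightarrow> bool" where
  "well_structured H \<longleftrightarrow>
     (\<exists>K :: (real^'n^'n) set.
        (\<forall>c A. A \<in> K \<longrightarrow> c *\<^sub>R A \<in> K) \<and>
        (\<forall>A B. A \<in> K \<longrightarrow> B \<in> K \<longrightarrow> A + B \<in> K) \<and>
        (\<forall>A B. A \<in> K \<longrightarrow> B \<in> K \<longrightarrow> A ** B \<in> K) \<and>
        mat 1 \<in> K \<and>
        H = {M. psd M} \<inter> K)"

definition mat_norm :: "real^'n^'n \<Rightarrow> real^'n \<Rightarrow> real" where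
  "mat_norm M x = sqrt (x \<bullet> (M *v x))"

definition H_norm :: "(real^'n^'n) set \<Rightarrow> real^'n \<Rightarrow> real" where
  "H_norm H x = Sup {mat_norm M x | M. M \<in> H \<and> trace M \<le> 1}"

definition dual_norm :: "(real^'n \<Rightarrow> real) \<Rightarrow> real^'n \<Rightarrow> real" where
  "dual_norm N y = Sup {x \<bullet> y | x. N x \<le> 1}"

text \<open>Smoothness constant L_N(f) of f w.r.t. a norm N, given the gradient g of f;
  it is the least L \<ge> 0 (possibly infinite) with the Lipschitz bound.\<close>
definition smoothness :: "(real^'n \<Rightarrow> real) \<Rightarrow> (real^'n \<Rightarrow> real^'n) \<Rightarrow> ereal" where
  "smoothness N g = Inf {ereal L | L. 0 \<le> L \<and>
      (\<forall>x y. dual_norm N (g x - g y) \<le> L * N (x - y))}"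

text \<open>Adaptive smoothness Lambda_H(f), given the Hessian Hf of f
  (Loewner order: A \<preceq> B iff B - A is PSD).\<close>
definition adaptive_smoothness ::
    "(real^'n^'n) set \<Rightarrow> (real^'n \<Rightarrow> real^'n^'n) \<Rightarrow> ereal" where
  "adaptive_smoothness H Hf = Inf {ereal (trace M) | M. M \<in> H \<and>
      (\<forall>x. psd (M - Hf x) \<and> psd (Hf x + M))}"

end

theory Submission
  imports Defs
begin

lemma sym_dot:
  fixes M :: "real^'n^'n"
  assumes "transpose M = M"
  shows "x \<bullet> (M *v y) = y \<bullet> (M *v x)"
proof -
  have "x \<bullet> (M *v y) = (x v* M) \<bullet> y" by (simp add: dot_lmul_matrix)
  also have "x v* M = M *v x" by (metis assms vector_transpose_matrix)
  finally show ?thesis by (simp add: inner_commute)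
qed

lemma psd_sym: "psd M \<Longrightarrow> x \<bullet> (M *v y) = y \<bullet> (M *v x)"
  unfolding psd_def using sym_dot by blast

lemma psd_nonneg: "psd M \<Longrightarrow> 0 \<le> x \<bullet> (M *v x)"
  unfolding psd_def by blast

lemma psd_cs:
  fixes M :: "real^'n^'n"
  assumes "psd M"
  shows "(y \<bullet> (M *v x))^2 \<le> (y \<bullet> (M *v y)) * (x \<bullet> (M *v x))"
proof -
  define a where "a = x \<bullet> (M *v x)"
  define b where "b = y \<bullet> (M *v x)"
  define c where "c = y \<bullet> (M *v y)"
  have q: "0 \<le> a + 2*t*b + t^2*c" for t
  proof -
    have "0 \<le> (x + t *\<^sub>R y) \<bullet> (M *v (x + t *\<^sub>R y))" using psd_nonneg[OF assms] .
    also have "\<dots> = a + t * (x \<bullet> (M *v y)) + t * b + t^2 * c"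
      by (simp add: a_def b_def c_def algebra_simps inner_add_left inner_add_right power2_eq_square)
    also have "x \<bullet> (M *v y) = b" using psd_sym[OF assms] b_def by blast
    finally show ?thesis by (simp add: algebra_simps)
  qed
  have c0: "0 \<le> c" unfolding c_def using psd_nonneg[OF assms] .
  show ?thesis
  proof (cases "c = 0")
    case True
    have "b = 0"
    proof (rule ccontr)
      assume "b \<noteq> 0"
      have "0 \<le> a + 2*(-(a+1)/(2*b))*b" using q[of "-(a+1)/(2*b)"] True by simp
      also have "\<dots> = -1" using \<open>b \<noteq> 0\<close> by (simp add: field_simps)
      finally show False by simp
    qed
    then show ?thesis using True by (simp add: b_def c_def[symmetric])
  next
    case False
    hence cp: "c > 0" using c0 by simp
    have "0 \<le> a + 2*(-b/c)*b + (-b/c)^2*c" using q .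
    also have "\<dots> = a - b^2/c" using cp by (simp add: field_simps power2_eq_square)
    finally have "b^2 / c \<le> a" by simp
    hence "b^2 \<le> a * c" using cp by (simp add: field_simps)
    then show ?thesis by (simp add: a_def b_def c_def mult.commute)
  qed
qed


lemma axis_inner_mv: "axis i 1 \<bullet> (v::real^'n) = v $ i"
  by (simp add: cart_eq_inner_axis inner_commute)

lemma mv_axis: "((M::real^'n^'n) *v axis i 1) $ i = M $ i $ i"
  by (simp add: matrix_vector_mult_def axis_def if_distrib cong: if_cong)

lemma psd_diag: "psd (M::real^'n^'n) \<Longrightarrow> 0 \<le> M $ i $ i"
  using psd_nonneg[of M "axis i 1"] by (simp add: axis_inner_mv mv_axis)

lemma psd_trace_nonneg: "psd (M::real^'n^'n) \<Longrightarrow> 0 \<le> trace M"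
  unfolding trace_def by (simp add: psd_diag sum_nonneg)

lemma psd_comp_bound:
  assumes "psd (M::real^'n^'n)"
  shows "\<bar>(M *v x) $ i\<bar> \<le> sqrt (M $ i $ i) * sqrt (x \<bullet> (M *v x))"
proof -
  have "((M *v x) $ i)^2 \<le> (M $ i $ i) * (x \<bullet> (M *v x))"
    using psd_cs[OF assms, of "axis i 1" x] by (simp add: axis_inner_mv mv_axis)
  hence "sqrt (((M *v x) $ i)^2) \<le> sqrt ((M $ i $ i) * (x \<bullet> (M *v x)))"
    using real_sqrt_le_mono by blast
  thus ?thesis by (simp add: real_sqrt_mult)
qed

lemma psd_quad_le_trace:
  assumes "psd (M::real^'n^'n)"
  shows "x \<bullet> (M *v x) \<le> trace M * (norm x)^2"
proof -
  define q where "q = x \<bullet> (M *v x)"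
  have q0: "0 \<le> q" unfolding q_def using psd_nonneg[OF assms] .
  define a :: "real^'n" where "a = (\<chi> i. \<bar>x $ i\<bar>)"
  define b :: "real^'n" where "b = (\<chi> i. sqrt (M $ i $ i))"
  have "q = (\<Sum>i\<in>UNIV. x $ i * (M *v x) $ i)" unfolding q_def inner_vec_def by simp
  also have "\<dots> \<le> (\<Sum>i\<in>UNIV. \<bar>x $ i\<bar> * (sqrt (M $ i $ i) * sqrt q))"
  proof (rule sum_mono)
    fix i
    have "x $ i * (M *v x) $ i \<le> \<bar>x $ i\<bar> * \<bar>(M *v x) $ i\<bar>"
      by (metis abs_ge_self abs_mult)
    also have "\<dots> \<le> \<bar>x $ i\<bar> * (sqrt (M $ i $ i) * sqrt q)"
      using psd_comp_bound[OF assms, of x i] unfolding q_def by (simp add: mult_left_mono)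
    finally show "x $ i * (M *v x) $ i \<le> \<bar>x $ i\<bar> * (sqrt (M $ i $ i) * sqrt q)" .
  qed
  also have "\<dots> = (a \<bullet> b) * sqrt q"
    unfolding a_def b_def inner_vec_def by (simp add: sum_distrib_right mult.assoc)
  also have "a \<bullet> b \<le> norm a * norm b" by (rule norm_cauchy_schwarz)
  hence "(a \<bullet> b) * sqrt q \<le> norm a * norm b * sqrt q" using q0 by (simp add: mult_right_mono)
  also have "norm a = norm x"
    unfolding norm_eq_sqrt_inner a_def inner_vec_def by (simp add: power2_eq_square[symmetric])
  also have "norm b = sqrt (trace M)"
    unfolding norm_eq_sqrt_inner b_def inner_vec_def trace_def
    using psd_diag[OF assms] by simp
  finally have *: "q \<le> norm x * sqrt (trace M) * sqrt q" .
  have t0: "0 \<le> trace M" using psd_trace_nonneg[OF assms] .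
  show ?thesis
  proof (cases "q = 0")
    case True thus ?thesis using t0 unfolding q_def[symmetric] by simp
  next
    case False
    hence "sqrt q > 0" using q0 by simp
    moreover have "sqrt q * sqrt q \<le> norm x * sqrt (trace M) * sqrt q" using * q0 by simp
    ultimately have "sqrt q \<le> norm x * sqrt (trace M)"
      by (metis mult_le_cancel_right_pos)
    hence "(sqrt q)^2 \<le> (norm x * sqrt (trace M))^2"
      by (rule power_mono) (simp add: q0)
    thus ?thesis using q0 t0 unfolding q_def[symmetric] by (simp add: power_mult_distrib mult.commute)
  qed
qed


lemma psd_scale: "psd (M::real^'n^'n) \<Longrightarrow> 0 \<le> c \<Longrightarrow> psd (c *\<^sub>R M)"
  unfolding psd_def by (auto simp: transpose_scalar scaleR_matrix_vector_assoc[symmetric])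

lemma psd_id: "0 \<le> c \<Longrightarrow> psd (c *\<^sub>R (mat 1::real^'n^'n))"
  by (rule psd_scale) (auto simp: psd_def)

lemma ws_scale: "well_structured H \<Longrightarrow> M \<in> H \<Longrightarrow> 0 \<le> c \<Longrightarrow> c *\<^sub>R M \<in> H"
  unfolding well_structured_def
proof (elim exE conjE)
  fix K assume "\<forall>c A. A \<in> K \<longrightarrow> c *\<^sub>R A \<in> K" "H = {M. psd M} \<inter> K" "M \<in> H" "0 \<le> c"
  thus "c *\<^sub>R M \<in> H" using psd_scale by auto
qed

lemma ws_id: "well_structured (H::(real^'n^'n) set) \<Longrightarrow> 0 \<le> c \<Longrightarrow> c *\<^sub>R mat 1 \<in> H"
  unfolding well_structured_def
proof (elim exE conjE)
  fix K :: "(real^'n^'n) set"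
  assume "\<forall>c A. A \<in> K \<longrightarrow> c *\<^sub>R A \<in> K" "H = {M. psd M} \<inter> K" "mat 1 \<in> K" "0 \<le> c"
  thus "c *\<^sub>R mat 1 \<in> H" using psd_id by auto
qed

lemma ws_psd: "well_structured H \<Longrightarrow> M \<in> H \<Longrightarrow> psd M"
  unfolding well_structured_def by auto

lemma trace_scale: "trace (c *\<^sub>R (M::real^'n^'n)) = c * trace M"
  unfolding trace_def by (simp add: sum_distrib_left)

lemma mat_norm_le: "psd M \<Longrightarrow> trace M \<le> 1 \<Longrightarrow> mat_norm M x \<le> norm x"
proof -
  assume a: "psd M" "trace M \<le> 1"
  have "x \<bullet> (M *v x) \<le> trace M * (norm x)^2" by (rule psd_quad_le_trace[OF a(1)])
  also have "\<dots> \<le> (norm x)^2" using a(2) by (metis mult_right_mono mult_1 zero_le_power2)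
  finally have "sqrt (x \<bullet> (M *v x)) \<le> sqrt ((norm x)^2)" by (rule real_sqrt_le_mono)
  thus ?thesis unfolding mat_norm_def by simp
qed


lemma I_in:
  assumes "well_structured (H::(real^'n^'n) set)"
  shows "(1 / real CARD('n)) *\<^sub>R mat 1 \<in> H \<and> trace ((1 / real CARD('n)) *\<^sub>R (mat 1::real^'n^'n)) \<le> 1"
  using ws_id[OF assms, of "1 / real CARD('n)"] by (simp add: trace_scale trace_I)

lemma HS_bdd:
  assumes "well_structured H"
  shows "bdd_above {mat_norm M x | M. M \<in> H \<and> trace M \<le> 1}"
  unfolding bdd_above_def using mat_norm_le ws_psd[OF assms] by blast

lemma HS_ne:
  assumes "well_structured (H::(real^'n^'n) set)"
  shows "{mat_norm M x | M. M \<in> H \<and> trace M \<le> 1} \<noteq> {}"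
  using I_in[OF assms] by blast

lemma H_norm_upper:
  assumes "well_structured H" "M \<in> H" "trace M \<le> 1"
  shows "mat_norm M x \<le> H_norm H x"
proof -
  have "mat_norm M x \<in> {mat_norm M x | M. M \<in> H \<and> trace M \<le> 1}" using assms by blast
  thus ?thesis unfolding H_norm_def by (rule cSup_upper[OF _ HS_bdd[OF assms(1)]])
qed

lemma H_norm_le:
  assumes "well_structured H"
  shows "H_norm H x \<le> norm x"
  unfolding H_norm_def
proof (rule cSup_least[OF HS_ne[OF assms]])
  fix r assume "r \<in> {mat_norm M x | M. M \<in> H \<and> trace M \<le> 1}"
  then obtain M where "r = mat_norm M x" "M \<in> H" "trace M \<le> 1" by blast
  thus "r \<le> norm x" using mat_norm_le ws_psd[OF assms] by blast
qed

lemma H_norm_nonneg: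
  assumes "well_structured (H::(real^'n^'n) set)"
  shows "0 \<le> H_norm H x"
proof -
  have "0 \<le> mat_norm ((1 / real CARD('n)) *\<^sub>R mat 1) x" unfolding mat_norm_def
    using psd_nonneg[OF psd_id[of "1/real CARD('n)"]] by simp
  also have "\<dots> \<le> H_norm H x" using I_in[OF assms] H_norm_upper[OF assms] by blast
  finally show ?thesis .
qed

lemma H_norm_lower:
  assumes "well_structured (H::(real^'n^'n) set)"
  shows "norm x \<le> sqrt (real CARD('n)) * H_norm H x"
proof -
  have "mat_norm ((1 / real CARD('n)) *\<^sub>R mat 1) x = norm x / sqrt (real CARD('n))"
    unfolding mat_norm_def norm_eq_sqrt_inner
    by (simp add: scaleR_matrix_vector_assoc[symmetric] real_sqrt_divide)
  moreover have "mat_norm ((1 / real CARD('n)) *\<^sub>R mat 1) x \<le> H_norm H x"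
    using I_in[OF assms] H_norm_upper[OF assms] by blast
  ultimately have "norm x / sqrt (real CARD('n)) \<le> H_norm H x" by simp
  thus ?thesis by (simp add: field_simps)
qed

lemma quad_le_H:
  assumes "well_structured H" "M \<in> H"
  shows "x \<bullet> (M *v x) \<le> trace M * (H_norm H x)^2"
proof -
  have t0: "0 \<le> trace M" using psd_trace_nonneg ws_psd assms by blast
  have "x \<bullet> (M *v x) \<le> c * (H_norm H x)^2" if c: "c > trace M" for c
  proof -
    have cp: "c > 0" using t0 c by simp
    have "(1/c) *\<^sub>R M \<in> H" using ws_scale[OF assms] cp by simp
    moreover have "trace ((1/c) *\<^sub>R M) \<le> 1" using c cp by (simp add: trace_scale)
    ultimately have "mat_norm ((1/c) *\<^sub>R M) x \<le> H_norm H x" using H_norm_upper[OF assms(1)] by blast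
    hence "(mat_norm ((1/c) *\<^sub>R M) x)^2 \<le> (H_norm H x)^2"
      by (rule power_mono) (use psd_nonneg[OF psd_scale[OF ws_psd[OF assms], of "1/c"]] cp in \<open>simp add: mat_norm_def\<close>)
    moreover have "(mat_norm ((1/c) *\<^sub>R M) x)^2 = (x \<bullet> (M *v x)) / c"
      unfolding mat_norm_def using psd_nonneg[OF ws_psd[OF assms], of x] cp
      by (simp add: scaleR_matrix_vector_assoc[symmetric])
    ultimately show ?thesis using cp by (simp add: field_simps)
  qed
  hence "\<forall>e>0. x \<bullet> (M *v x) \<le> (trace M + e) * (H_norm H x)^2" by simp
  thus ?thesis
  proof -
    assume h: "\<forall>e>0. x \<bullet> (M *v x) \<le> (trace M + e) * (H_norm H x)^2"
    show ?thesis
    proof (rule field_le_epsilon)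
      fix e :: real assume e: "0 < e"
      show "x \<bullet> (M *v x) \<le> trace M * (H_norm H x)^2 + e"
      proof (cases "(H_norm H x)^2 = 0")
        case True thus ?thesis using h[rule_format, of 1] e by simp
      next
        case False
        hence p: "(H_norm H x)^2 > 0" by simp
        have "x \<bullet> (M *v x) \<le> (trace M + e / (H_norm H x)^2) * (H_norm H x)^2"
          using h p e by simp
        thus ?thesis using p by (simp add: field_simps)
      qed
    qed
  qed
qed

lemma dual_bdd:
  assumes "well_structured (H::(real^'n^'n) set)"
  shows "bdd_above {x \<bullet> y | x. H_norm H x \<le> 1}"
proof -
  have "x \<bullet> y \<le> sqrt (real CARD('n)) * norm y" if "H_norm H x \<le> 1" for x
  proof -
    have "norm x \<le> sqrt (real CARD('n))"
      by (rule order_trans[OF H_norm_lower[OF assms, of x]]) (rule mult_left_le[OF that], simp)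
    hence "norm x * norm y \<le> sqrt (real CARD('n)) * norm y" by (simp add: mult_right_mono)
    thus ?thesis using norm_cauchy_schwarz[of x y] by linarith
  qed
  thus ?thesis unfolding bdd_above_def by blast
qed

lemma dual_upper:
  assumes "well_structured (H::(real^'n^'n) set)" "H_norm H u \<le> 1"
  shows "u \<bullet> y \<le> dual_norm (H_norm H) y"
proof -
  have "u \<bullet> y \<in> {x \<bullet> y | x. H_norm H x \<le> 1}" using assms by blast
  thus ?thesis unfolding dual_norm_def by (rule cSup_upper[OF _ dual_bdd[OF assms(1)]])
qed

lemma dual_least:
  assumes "well_structured (H::(real^'n^'n) set)" "\<And>u. H_norm H u \<le> 1 \<Longrightarrow> u \<bullet> y \<le> B"
  shows "dual_norm (H_norm H) y \<le> B"
proof -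
  have "H_norm H 0 \<le> 1" using H_norm_le[OF assms(1), of 0] by simp
  thus ?thesis unfolding dual_norm_def using assms(2) by (intro cSup_least) auto
qed


lemma transpose_diff: "transpose (A - B) = transpose A - (transpose B :: real^'n^'n)"
  by (simp add: transpose_def vec_eq_iff)

lemma transpose_add: "transpose (A + B) = transpose A + (transpose B :: real^'n^'n)"
  by (simp add: transpose_def vec_eq_iff)

lemma qb:
  fixes M A :: "real^'n^'n"
  assumes P: "psd (M - A)" and Q: "psd (A + M)"
  shows "2 * s * (u \<bullet> (A *v v)) \<le> s^2 * (u \<bullet> (M *v u)) + v \<bullet> (M *v v)"
proof -
  have s1: "u \<bullet> ((M - A) *v v) = v \<bullet> ((M - A) *v u)" by (rule psd_sym[OF P])
  have s2: "u \<bullet> ((A + M) *v v) = v \<bullet> ((A + M) *v u)" by (rule psd_sym[OF Q])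
  have e1: "u \<bullet> (M *v v) - u \<bullet> (A *v v) = v \<bullet> (M *v u) - v \<bullet> (A *v u)"
    using s1 by (simp add: matrix_vector_mult_diff_rdistrib inner_diff_right)
  have e2: "u \<bullet> (A *v v) + u \<bullet> (M *v v) = v \<bullet> (A *v u) + v \<bullet> (M *v u)"
    using s2 by (simp add: matrix_vector_mult_add_rdistrib inner_add_right)
  have n1: "0 \<le> (s *\<^sub>R u + v) \<bullet> ((M - A) *v (s *\<^sub>R u + v))" by (rule psd_nonneg[OF P])
  have n2: "0 \<le> (s *\<^sub>R u - v) \<bullet> ((A + M) *v (s *\<^sub>R u - v))" by (rule psd_nonneg[OF Q])
  have n1': "0 \<le> s^2 * (u \<bullet> (M *v u)) - s^2 * (u \<bullet> (A *v u)) + s * (u \<bullet> (M *v v)) - s * (u \<bullet> (A *v v))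
      + s * (v \<bullet> (M *v u)) - s * (v \<bullet> (A *v u)) + v \<bullet> (M *v v) - v \<bullet> (A *v v)"
    using n1 by (simp add: matrix_vector_mult_diff_rdistrib matrix_vector_right_distrib matrix_vector_mult_scaleR
        inner_add_left inner_add_right inner_diff_left inner_diff_right power2_eq_square algebra_simps)
  have n2': "0 \<le> s^2 * (u \<bullet> (M *v u)) + s^2 * (u \<bullet> (A *v u)) - s * (u \<bullet> (M *v v)) - s * (u \<bullet> (A *v v))
      - s * (v \<bullet> (M *v u)) - s * (v \<bullet> (A *v u)) + v \<bullet> (M *v v) + v \<bullet> (A *v v)"
    using n2 by (simp add: matrix_vector_mult_add_rdistrib matrix_vector_mult_diff_distrib matrix_vector_mult_scaleR
        inner_add_left inner_add_right inner_diff_left inner_diff_right power2_eq_square algebra_simps)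
  have "u \<bullet> (A *v v) = v \<bullet> (A *v u)" using e1 e2 by linarith
  thus ?thesis using n1' n2' by (simp add: algebra_simps)
qed

lemma deriv_line:
  fixes g :: "real^'n \<Rightarrow> real^'n" and Hf :: "real^'n \<Rightarrow> real^'n^'n"
  assumes g: "\<And>x. (g has_derivative (\<lambda>h. Hf x *v h)) (at x)"
  shows "((\<lambda>t. u \<bullet> g (y + t *\<^sub>R v)) has_real_derivative (u \<bullet> (Hf (y + t *\<^sub>R v) *v v))) (at t)"
proof -
  have l: "((\<lambda>t. y + t *\<^sub>R v) has_derivative (\<lambda>h. h *\<^sub>R v)) (at t)"
    by (auto intro!: derivative_eq_intros)
  have "((\<lambda>t. g (y + t *\<^sub>R v)) has_derivative (\<lambda>h. Hf (y + t *\<^sub>R v) *v (h *\<^sub>R v))) (at t)"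
    using has_derivative_compose[OF l g] by (simp add: o_def)
  hence "((\<lambda>t. u \<bullet> g (y + t *\<^sub>R v)) has_derivative (\<lambda>h. u \<bullet> (Hf (y + t *\<^sub>R v) *v (h *\<^sub>R v)))) (at t)"
    by (rule has_derivative_inner_right)
  moreover have "(\<lambda>h. u \<bullet> (Hf (y + t *\<^sub>R v) *v (h *\<^sub>R v))) = (*) (u \<bullet> (Hf (y + t *\<^sub>R v) *v v))"
  proof
    fix h :: real
    have "Hf (y + t *\<^sub>R v) *v (h *\<^sub>R v) = h *\<^sub>R (Hf (y + t *\<^sub>R v) *v v)" by (rule matrix_vector_mult_scaleR)
    thus "u \<bullet> (Hf (y + t *\<^sub>R v) *v (h *\<^sub>R v)) = u \<bullet> (Hf (y + t *\<^sub>R v) *v v) * h" by simp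
  qed
  ultimately show ?thesis unfolding has_field_derivative_def by simp
qed


lemma part1_pair:
  fixes g :: "real^'n \<Rightarrow> real^'n" and Hf :: "real^'n \<Rightarrow> real^'n^'n"
    and H :: "(real^'n^'n) set"
  assumes ws: "well_structured H" and MH: "M \<in> H"
    and good: "\<forall>z. psd (M - Hf z) \<and> psd (Hf z + M)"
    and g: "\<And>x. (g has_derivative (\<lambda>h. Hf x *v h)) (at x)"
  shows "dual_norm (H_norm H) (g x - g y) \<le> trace M * H_norm H (x - y)"
proof (rule dual_least[OF ws])
  fix u assume u: "H_norm H u \<le> 1"
  define v where "v = x - y"
  define T where "T = trace M"
  have T0: "0 \<le> T" unfolding T_def using psd_trace_nonneg ws_psd[OF ws MH] by blast
  have "\<exists>z. 0 < z \<and> z < 1 \<and> ((\<lambda>t. u \<bullet> g (y + t *\<^sub>R v)) 1 - (\<lambda>t. u \<bullet> g (y + t *\<^sub>R v)) 0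
          = (1 - 0) * (u \<bullet> (Hf (y + z *\<^sub>R v) *v v)))"
    by (rule MVT2) (simp, rule deriv_line[OF g])
  then obtain z where "u \<bullet> g (y + v) - u \<bullet> g y = u \<bullet> (Hf (y + z *\<^sub>R v) *v v)" by auto
  hence eq: "u \<bullet> (g x - g y) = u \<bullet> (Hf (y + z *\<^sub>R v) *v v)"
    unfolding v_def by (simp add: inner_diff_right)
  define A where "A = Hf (y + z *\<^sub>R v)"
  have P: "psd (M - A)" and Q: "psd (A + M)" using good unfolding A_def by auto
  have Nu0: "0 \<le> H_norm H u" by (rule H_norm_nonneg[OF ws])
  have uMu: "u \<bullet> (M *v u) \<le> T"
  proof -
    have "u \<bullet> (M *v u) \<le> T * (H_norm H u)^2" unfolding T_def by (rule quad_le_H[OF ws MH])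
    also have "(H_norm H u)^2 \<le> 1" using u Nu0 by (simp add: power_le_one)
    hence "T * (H_norm H u)^2 \<le> T" using T0 by (simp add: mult_left_le)
    finally show ?thesis .
  qed
  have vMv: "v \<bullet> (M *v v) \<le> T * (H_norm H v)^2" unfolding T_def by (rule quad_le_H[OF ws MH])
  show "u \<bullet> (g x - g y) \<le> trace M * H_norm H (x - y)"
  proof (cases "v = 0")
    case True
    thus ?thesis using eq T0 H_norm_nonneg[OF ws, of "x - y"] unfolding v_def T_def by simp
  next
    case False
    have "0 < norm v" using False by simp
    also have "norm v \<le> sqrt (real CARD('n)) * H_norm H v" by (rule H_norm_lower[OF ws])
    finally have Nv: "0 < H_norm H v" by (simp add: zero_less_mult_iff)
    have "2 * H_norm H v * (u \<bullet> (A *v v)) \<le> (H_norm H v)^2 * (u \<bullet> (M *v u)) + v \<bullet> (M *v v)"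
      by (rule qb[OF P Q])
    also have "\<dots> \<le> (H_norm H v)^2 * T + T * (H_norm H v)^2"
      using mult_left_mono[OF uMu zero_le_power2[of "H_norm H v"]] vMv by linarith
    finally have "2 * H_norm H v * (u \<bullet> (A *v v)) \<le> 2 * H_norm H v * (T * H_norm H v)"
      by (simp add: power2_eq_square algebra_simps)
    hence "u \<bullet> (A *v v) \<le> T * H_norm H v" using Nv by simp
    thus ?thesis using eq unfolding A_def T_def v_def by simp
  qed
qed

lemma part2_dir:
  fixes g :: "real^'n \<Rightarrow> real^'n" and Hf :: "real^'n \<Rightarrow> real^'n^'n"
    and H :: "(real^'n^'n) set"
  assumes ws: "well_structured H"
    and Lip: "\<forall>x y. dual_norm (H_norm H) (g x - g y) \<le> L * H_norm H (x - y)"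
    and L0: "0 \<le> L"
    and g: "\<And>x. (g has_derivative (\<lambda>h. Hf x *v h)) (at x)"
    and u: "H_norm H u \<le> 1"
  shows "u \<bullet> (Hf x *v v) \<le> L * norm v"
proof -
  define \<psi> where "\<psi> = (\<lambda>t. u \<bullet> g (x + t *\<^sub>R v))"
  have "(\<psi> has_real_derivative (u \<bullet> (Hf (x + 0 *\<^sub>R v) *v v))) (at 0)"
    unfolding \<psi>_def by (rule deriv_line[OF g])
  hence "((\<lambda>h. (\<psi> (0 + h) - \<psi> 0) / h) \<longlongrightarrow> u \<bullet> (Hf x *v v)) (at 0)"
    unfolding DERIV_def by simp
  hence lim: "((\<lambda>h. (\<psi> (0 + h) - \<psi> 0) / h) \<longlongrightarrow> u \<bullet> (Hf x *v v)) (at_right 0)"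
    by (rule tendsto_mono[OF at_le, rotated]) simp
  have ev: "\<forall>\<^sub>F h in at_right 0. (\<psi> (0 + h) - \<psi> 0) / h \<le> L * norm v"
  proof (rule eventually_at_rightI[of 0 1])
    fix h :: real assume "h \<in> {0<..<1}"
    hence h: "0 < h" by simp
    have "\<psi> (0 + h) - \<psi> 0 = u \<bullet> (g (x + h *\<^sub>R v) - g x)"
      unfolding \<psi>_def by (simp add: inner_diff_right)
    also have "\<dots> \<le> dual_norm (H_norm H) (g (x + h *\<^sub>R v) - g x)" by (rule dual_upper[OF ws u])
    also have "\<dots> \<le> L * H_norm H (x + h *\<^sub>R v - x)" using Lip by blast
    also have "\<dots> \<le> L * norm (h *\<^sub>R v)"
      using H_norm_le[OF ws, of "h *\<^sub>R v"] L0 by (simp add: mult_left_mono)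
    also have "\<dots> = h * (L * norm v)" using h by simp
    finally show "(\<psi> (0 + h) - \<psi> 0) / h \<le> L * norm v" using h by (simp add: divide_le_eq mult.commute)
  qed simp
  show ?thesis by (rule tendsto_upperbound[OF lim ev]) simp
qed

lemma part2_quad:
  fixes g :: "real^'n \<Rightarrow> real^'n" and Hf :: "real^'n \<Rightarrow> real^'n^'n"
    and H :: "(real^'n^'n) set"
  assumes ws: "well_structured H"
    and Lip: "\<forall>x y. dual_norm (H_norm H) (g x - g y) \<le> L * H_norm H (x - y)"
    and L0: "0 \<le> L"
    and g: "\<And>x. (g has_derivative (\<lambda>h. Hf x *v h)) (at x)"
  shows "\<bar>v \<bullet> (Hf x *v v)\<bar> \<le> L * (v \<bullet> v)"
proof (cases "v = 0")
  case True thus ?thesis by simp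
next
  case False
  hence nv: "0 < norm v" by simp
  have "H_norm H ((1 / norm v) *\<^sub>R v) \<le> 1"
    using H_norm_le[OF ws, of "(1 / norm v) *\<^sub>R v"] nv by simp
  from part2_dir[OF ws Lip L0 g this, of x v]
  have a: "(v \<bullet> (Hf x *v v)) / norm v \<le> L * norm v" by simp
  have "H_norm H (-(1 / norm v) *\<^sub>R v) \<le> 1"
    using H_norm_le[OF ws, of "-(1 / norm v) *\<^sub>R v"] nv by simp
  from part2_dir[OF ws Lip L0 g this, of x v]
  have b: "- (v \<bullet> (Hf x *v v)) / norm v \<le> L * norm v" by simp
  have "v \<bullet> v = norm v * norm v" by (metis power2_norm_eq_inner power2_eq_square)
  moreover have "v \<bullet> (Hf x *v v) \<le> L * norm v * norm v"
    using a nv by (simp add: divide_le_eq)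
  moreover have "- (v \<bullet> (Hf x *v v)) \<le> L * norm v * norm v"
  proof -
    have "- (v \<bullet> (Hf x *v v)) = norm v * (- (v \<bullet> (Hf x *v v) / norm v))" using nv by simp
    also have "\<dots> \<le> norm v * (L * norm v)" using b nv by (intro mult_left_mono) simp_all
    finally show ?thesis by (simp add: mult.commute)
  qed
  ultimately show ?thesis by (simp add: abs_le_iff mult.assoc)
qed


theorem proposition2p1:
  fixes H :: "(real^'n^'n) set"
    and f :: "real^'n \<Rightarrow> real"
    and g :: "real^'n \<Rightarrow> real^'n"
    and Hf :: "real^'n \<Rightarrow> real^'n^'n"
  assumes "well_structured H"
    and "\<And>x. (f has_derivative (\<lambda>h. g x \<bullet> h)) (at x)"
    and "\<And>x. (g has_derivative (\<lambda>h. Hf x *v h)) (at x)"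
    and "continuous_on UNIV Hf"
    and "adaptive_smoothness H Hf < \<infinity>"
  shows "smoothness (H_norm H) g \<le> adaptive_smoothness H Hf \<and>
         adaptive_smoothness H Hf \<le> ereal (real CARD('n)) * smoothness (H_norm H) g"
proof -
  note ws = assms(1) and g = assms(3)
  define G where "G = {ereal (trace M) | M. M \<in> H \<and> (\<forall>x. psd (M - Hf x) \<and> psd (Hf x + M))}"
  define T where "T = {ereal L | L. 0 \<le> L \<and>
      (\<forall>x y. dual_norm (H_norm H) (g x - g y) \<le> L * H_norm H (x - y))}"
  have AG: "adaptive_smoothness H Hf = Inf G" unfolding adaptive_smoothness_def G_def by simp
  have ST: "smoothness (H_norm H) g = Inf T" unfolding smoothness_def T_def by simp
  have "G \<noteq> {}"
  proof
    assume "G = {}"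
    hence "adaptive_smoothness H Hf = \<infinity>" using AG by (simp add: top_ereal_def)
    thus False using assms(5) by simp
  qed
  then obtain M0 where M0: "M0 \<in> H" "\<forall>x. psd (M0 - Hf x) \<and> psd (Hf x + M0)"
    unfolding G_def by blast
  have sym: "transpose (Hf x) = Hf x" for x
  proof -
    have "transpose (M0 - Hf x) = M0 - Hf x" using M0(2) unfolding psd_def by blast
    moreover have "transpose M0 = M0" using ws_psd[OF ws M0(1)] unfolding psd_def by blast
    ultimately show ?thesis by (simp add: transpose_diff)
  qed
  have part1: "smoothness (H_norm H) g \<le> adaptive_smoothness H Hf"
    unfolding AG
  proof (rule Inf_greatest)
    fix r assume "r \<in> G"
    then obtain M where M: "r = ereal (trace M)" "M \<in> H" "\<forall>x. psd (M - Hf x) \<and> psd (Hf x + M)"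
      unfolding G_def by blast
    have "ereal (trace M) \<in> T"
      unfolding T_def using psd_trace_nonneg[OF ws_psd[OF ws M(2)]] part1_pair[OF ws M(2) M(3) g]
      by blast
    thus "smoothness (H_norm H) g \<le> r" unfolding ST M(1) by (rule Inf_lower)
  qed
  have key: "adaptive_smoothness H Hf \<le> ereal (real CARD('n) * L)"
    if L0: "0 \<le> L" and Lip: "\<forall>x y. dual_norm (H_norm H) (g x - g y) \<le> L * H_norm H (x - y)" for L
  proof -
    define M :: "real^'n^'n" where "M = L *\<^sub>R mat 1"
    have MH: "M \<in> H" unfolding M_def by (rule ws_id[OF ws L0])
    have Mv: "M *v v = L *\<^sub>R v" for v unfolding M_def by (simp add: scaleR_matrix_vector_assoc[symmetric])
    have good: "psd (M - Hf x) \<and> psd (Hf x + M)" for x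
    proof -
      have b: "\<bar>v \<bullet> (Hf x *v v)\<bar> \<le> L * (v \<bullet> v)" for v by (rule part2_quad[OF ws Lip L0 g])
      have b2: "0 \<le> v \<bullet> (Hf x *v v) + L * (v \<bullet> v)" for v using b[of v] by linarith
      have tM: "transpose M = M" unfolding M_def by (simp add: transpose_scalar)
      show ?thesis unfolding psd_def
        using b b2 sym[of x] tM
        by (auto simp: transpose_diff transpose_add matrix_vector_mult_diff_rdistrib
            matrix_vector_mult_add_rdistrib Mv inner_diff_right inner_add_right abs_le_iff)
    qed
    have "ereal (trace M) \<in> G" unfolding G_def using MH good by blast
    hence "adaptive_smoothness H Hf \<le> ereal (trace M)" unfolding AG by (rule Inf_lower)
    also have "trace M = real CARD('n) * L" unfolding M_def by (simp add: trace_scale trace_I)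
    finally show ?thesis .
  qed
  have S0: "0 \<le> smoothness (H_norm H) g"
    unfolding ST by (rule Inf_greatest) (auto simp: T_def)
  have dpos: "0 < real CARD('n)" by simp
  have part2: "adaptive_smoothness H Hf \<le> ereal (real CARD('n)) * smoothness (H_norm H) g"
  proof (cases "smoothness (H_norm H) g = \<infinity>")
    case True thus ?thesis using dpos by simp
  next
    case False
    then obtain s where s: "smoothness (H_norm H) g = ereal s" using S0 by (cases "smoothness (H_norm H) g") auto
    show ?thesis
    proof (rule ereal_le_epsilon2)
      fix e :: real assume e: "0 < e"
      have "Inf T < ereal (s + e / real CARD('n))" using s ST e dpos by simp
      then obtain r where "r \<in> T" "r < ereal (s + e / real CARD('n))" unfolding Inf_less_iff by blast
      then obtain L where L: "r = ereal L" "0 \<le> L"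
        "\<forall>x y. dual_norm (H_norm H) (g x - g y) \<le> L * H_norm H (x - y)" "L < s + e / real CARD('n)"
        unfolding T_def by auto
      have "adaptive_smoothness H Hf \<le> ereal (real CARD('n) * L)" by (rule key[OF L(2) L(3)])
      also have "real CARD('n) * L \<le> real CARD('n) * s + e"
        using L(4) dpos by (simp add: field_simps)
      finally show "adaptive_smoothness H Hf \<le> ereal (real CARD('n)) * smoothness (H_norm H) g + ereal e"
        unfolding s by simp
    qed
  qed
  show ?thesis using part1 part2 by blast
qed

end
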